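(* Let $x_s<x_t$ be integers, let $C\ge 0$, and let $f:[x_s,x_t]\to\mathbb{R}$ be such that $([x_s,x_t],f)$ is an Ameso($C$) pair. Suppose there exist $x^0\in[x_s,x_t]$ and a positive integer $b$ with $[x^0-b,x^0]\subseteq[x_s,x_t]$ such that $f(x^0)=\min_{y\in[x^0-b,x^0]}f(y)$ and $f(x^0)+C\le\max_{y\in[x^0-b,x^0]}f(y)$. Then $f(x^0)=\min_{y\in[x_s,x^0]}f(y)$.
   Context: For integers $a\le b$, $[a,b]$ denotes the set of integers $\{a,a+1,\dots,b\}$. Floors and ceilings of vectors are taken componentwise. A set $D^n\subseteq\mathbb{Z}^n$ is an Ameso set if $\lceil(\vec x+\vec y)/2\rceil,\lfloor(\vec x+\vec y)/2\rfloor\in D^n$ for all $\vec x,\vec y\in D^n$. For $C\ge 0$, $(D^n,f)$ is an Ameso($C$) pair if $D^n$ is an Ameso set, $f:D^n\to\mathbb{R}$ is bounded below, and $f(\vec x)+f(\vec y)+C\ge f(\lceil(\vec x+\vec y)/2\rceil)+f(\lfloor(\vec x+\vec y)/2\rfloor)$ for all $\vec x,\vec y\in D^n$. *)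

theory Defs
  imports Complex_Main
begin

text \<open>One-dimensional instance (n = 1) of Ameso sets and Ameso(C) pairs.
  Floors and ceilings of the midpoint (x+y)/2 are taken in the reals.\<close>

definition ameso_set :: "int set \<Rightarrow> bool" where
  "ameso_set D \<longleftrightarrow> (\<forall>x\<in>D. \<forall>y\<in>D.
     \<lceil>(real_of_int x + real_of_int y) / 2\<rceil> \<in> D \<and>
     \<lfloor>(real_of_int x + real_of_int y) / 2\<rfloor> \<in> D)"

definition ameso_pair :: "int set \<Rightarrow> (int \<Rightarrow> real) \<Rightarrow> real \<Rightarrow> bool" where
  "ameso_pair D f C \<longleftrightarrow> ameso_set D \<and> bdd_below (f ` D) \<and>
     (\<forall>x\<in>D. \<forall>y\<in>D. f x + f y + C \<ge>
        f \<lceil>(real_of_int x + real_of_int y) / 2\<rceil> +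
        f \<lfloor>(real_of_int x + real_of_int y) / 2\<rfloor>)"

end

theory Submission imports Defs begin

lemma mid_even: fixes p q k :: int assumes "p + q = 2*k"
  shows "\<lceil>(real_of_int p + real_of_int q) / 2\<rceil> = k" "\<lfloor>(real_of_int p + real_of_int q) / 2\<rfloor> = k"
proof -
  have "(real_of_int p + real_of_int q) / 2 = real_of_int k"
    using assms by (metis of_int_add of_int_mult of_int_numeral nonzero_mult_div_cancel_left zero_neq_numeral)
  then show "\<lceil>(real_of_int p + real_of_int q) / 2\<rceil> = k" "\<lfloor>(real_of_int p + real_of_int q) / 2\<rfloor> = k" by simp_all
qed

lemma mid_odd: fixes p q k :: int assumes "p + q = 2*k + 1"
  shows "\<lceil>(real_of_int p + real_of_int q) / 2\<rceil> = k + 1" "\<lfloor>(real_of_int p + real_of_int q) / 2\<rfloor> = k"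
proof -
  have e: "(real_of_int p + real_of_int q) / 2 = real_of_int k + 1/2"
  proof -
    have "real_of_int p + real_of_int q = 2 * real_of_int k + 1"
      using assms by (metis of_int_add of_int_mult of_int_numeral of_int_1)
    then show ?thesis by simp
  qed
  show "\<lceil>(real_of_int p + real_of_int q) / 2\<rceil> = k + 1" unfolding e
    by (simp add: ceiling_eq_iff)
  show "\<lfloor>(real_of_int p + real_of_int q) / 2\<rfloor> = k" unfolding e
    by (simp add: floor_eq_iff)
qed

locale amctx =
  fixes xs xt z x0 :: int and C :: real and f :: "int \<Rightarrow> real"
  assumes A: "\<And>p q. xs \<le> p \<Longrightarrow> p \<le> xt \<Longrightarrow> xs \<le> q \<Longrightarrow> q \<le> xt \<Longrightarrow>
     f p + f q + C \<ge> f \<lceil>(real_of_int p + real_of_int q) / 2\<rceil> + f \<lfloor>(real_of_int p + real_of_int q) / 2\<rfloor>"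
  and C0: "C \<ge> 0" and zs: "xs \<le> z" and zx: "z < x0" and xt: "x0 \<le> xt"
  and fz: "f z < f x0"
begin

lemma E: assumes "xs \<le> p" "p \<le> xt" "xs \<le> q" "q \<le> xt" "p + q = 2*k"
  shows "f p + f q + C \<ge> 2 * f k"
  using A[OF assms(1-4)] mid_even[OF assms(5)] by simp

lemma O: assumes "xs \<le> p" "p \<le> xt" "xs \<le> q" "q \<le> xt" "p + q = 2*k + 1"
  shows "f p + f q + C \<ge> f k + f (k+1)"
  using A[OF assms(1-4)] mid_odd[OF assms(5)] by simp

lemma no_high: assumes "z < y" "y < x0" "f y \<ge> f x0 + C" shows False
proof -
  define H where "H = {p. z < p \<and> p < x0 \<and> f p \<ge> f x0 + C}"
  have finH: "finite H" unfolding H_def by (rule finite_subset[of _ "{z..x0}"]) auto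
  have yH: "y \<in> H" using assms unfolding H_def by auto
  define M where "M = Max (f ` H)"
  have leM: "\<And>p. p \<in> H \<Longrightarrow> f p \<le> M" unfolding M_def using finH by auto
  have "M \<in> f ` H" unfolding M_def using finH yH by (intro Max_in) auto
  define H' where "H' = {p\<in>H. f p = M}"
  have finH': "finite H'" unfolding H'_def using finH by auto
  have neH': "H' \<noteq> {}" using \<open>M \<in> f ` H\<close> unfolding H'_def by auto
  define h where "h = Min H'"
  have hH': "h \<in> H'" unfolding h_def using finH' neH' by (rule Min_in)
  have hmin: "\<And>p. p \<in> H' \<Longrightarrow> h \<le> p" unfolding h_def using finH' by auto
  have hz: "z < h" and hx: "h < x0" and fh: "f h \<ge> f x0 + C" and fhM: "f h = M"
    using hH' unfolding H'_def H_def by auto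
  show False
  proof (cases "2*h - z \<le> x0")
    case True
    define w where "w = 2*h - z"
    have "f z + f w + C \<ge> 2 * f h" using E[of z w h] zs hz hx True xt unfolding w_def by simp
    then have fw: "f w > f h" using fz fh by linarith
    have "w \<noteq> x0" using fw fh C0 by auto
    then have "w \<in> H" unfolding H_def using True hz fw fh unfolding w_def by auto
    then show False using leM fw fhM by fastforce
  next
    case False
    define u where "u = 2*h - x0"
    have "f u + f x0 + C \<ge> 2 * f h" using E[of u x0 h] zs hz hx False xt unfolding u_def by simp
    then have fu: "f u \<ge> f h" using fh by linarith
    have "u \<in> H" unfolding H_def using False hx fu fh unfolding u_def by auto
    then have "u \<in> H'" unfolding H'_def using leM[of u] fu fhM by auto
    then show False using hmin[of u] hx unfolding u_def by auto
  qed
qed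

end

theorem lemma5:
  fixes xs xt x0 b :: int and C :: real and f :: "int \<Rightarrow> real"
  assumes "xs < xt"
    and "C \<ge> 0"
    and "ameso_pair {xs..xt} f C"
    and "x0 \<in> {xs..xt}"
    and "b > 0"
    and "{x0 - b..x0} \<subseteq> {xs..xt}"
    and "f x0 = Min (f ` {x0 - b..x0})"
    and "f x0 + C \<le> Max (f ` {x0 - b..x0})"
  shows "f x0 = Min (f ` {xs..x0})"
proof (rule ccontr)
  assume ne: "f x0 \<noteq> Min (f ` {xs..x0})"
  have A: "\<And>p q. xs \<le> p \<Longrightarrow> p \<le> xt \<Longrightarrow> xs \<le> q \<Longrightarrow> q \<le> xt \<Longrightarrow>
     f p + f q + C \<ge> f \<lceil>(real_of_int p + real_of_int q) / 2\<rceil> + f \<lfloor>(real_of_int p + real_of_int q) / 2\<rfloor>"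
    using assms(3) unfolding ameso_pair_def by auto
  have x0in: "xs \<le> x0" "x0 \<le> xt" using assms(4) by auto
  have "Min (f ` {xs..x0}) \<le> f x0" using x0in by (intro Min_le) auto
  moreover have "Min (f ` {xs..x0}) \<in> f ` {xs..x0}" using x0in by (intro Min_in) auto
  ultimately obtain z where z: "xs \<le> z" "z \<le> x0" "f z < f x0" using ne by force
  have win: "\<And>p. p \<in> {x0 - b..x0} \<Longrightarrow> f x0 \<le> f p" using assms(7) by (simp add: Min_le)
  have zb: "z < x0 - b" using win[of z] z by force
  have "Max (f ` {x0 - b..x0}) \<in> f ` {x0 - b..x0}" using assms(5) by (intro Max_in) auto
  then obtain y where y: "y \<in> {x0 - b..x0}" "f y \<ge> f x0 + C" using assms(8) by force
  interpret amctx xs xt z x0 C f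
    using A assms(2) z x0in zb assms(5) by unfold_locales auto
  show False
  proof (cases "y < x0")
    case True
    then show False using no_high[of y] y zb by auto
  next
    case False
    then have "y = x0" using y by auto
    then have "C = 0" using y assms(2) by auto
    moreover have "f (x0 - 1) \<ge> f x0" using win[of "x0 - 1"] assms(5) by auto
    ultimately show False using no_high[of "x0 - 1"] zb assms(5) by auto
  qed
qed

end
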